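(* Let $k$ be a positive integer, let $D$ be a digraph containing no subdivision of $B(k,1;k)$, and let $\mathcal{C}$ be a $k$-suitable collection of directed cycles of $D$. Let $C_1,C_2,C_3\in\mathcal{C}$ be distinct and pairwise intersecting, and let $v\in (V(C_2)\cap V(C_3))\setminus V(C_1)$. Then exactly one of the following holds: (i) $C_2[t_{1,2},v]$ and $C_3[t_{1,3},v]$ both have length less than $3k$; (ii) $C_2[v,s_{1,2}]$ and $C_3[v,s_{1,3}]$ both have length less than $3k$.
   Context: A collection $\mathcal{C}$ of directed cycles is $k$-suitable if every cycle of $\mathcal{C}$ has length at least $8k$ and for any two distinct $C_i,C_j\in\mathcal{C}$, the set $V(C_i)\cap V(C_j)$ is either empty or the vertex set of a directed path $P_{i,j}$ with at most $k$ vertices which is a subpath of both $C_i$ and $C_j$; $s_{i,j}$ and $t_{i,j}$ denote the initial and terminal vertices of $P_{i,j}$. For a directed cycle $C$ and vertices $a,b$ on it, $C[a,b]$ is the directed subpath of $C$ from $a$ to $b$. Length = number of arcs. A digraph contains a subdivision of $B(k_1,k_2;k_3)$ if there exist distinct vertices $u,w$ and three pairwise internally vertex-disjoint directed paths: two from $u$ to $w$ of lengths at least $k_1$ and $k_2$, and one from $w$ to $u$ of length at least $k_3$. *)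

theory Defs
  imports Main
begin

definition digraph :: "'a set \<Rightarrow> ('a \<times> 'a) set \<Rightarrow> bool" where
  "digraph V E \<longleftrightarrow> finite V \<and> E \<subseteq> V \<times> V \<and> (\<forall>x. (x, x) \<notin> E)"

definition dpath :: "('a \<times> 'a) set \<Rightarrow> 'a list \<Rightarrow> bool" where
  "dpath E p \<longleftrightarrow> p \<noteq> [] \<and> distinct p \<and> (\<forall>i. Suc i < length p \<longrightarrow> (p ! i, p ! Suc i) \<in> E)"

definition plen :: "'a list \<Rightarrow> nat" where
  "plen p = length p - 1"

definition dcycle :: "'a set \<Rightarrow> ('a \<times> 'a) set \<Rightarrow> 'a list \<Rightarrow> bool" where
  "dcycle V E c \<longleftrightarrow> length c \<ge> 2 \<and> distinct c \<and> set c \<subseteq> V \<and>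
     (\<forall>i < length c. (c ! i, c ! ((i + 1) mod length c)) \<in> E)"

definition cidx :: "'a list \<Rightarrow> 'a \<Rightarrow> nat" where
  "cidx c a = (THE i. i < length c \<and> c ! i = a)"

text \<open>Length (number of arcs) of the subpath C[a,b] of the cycle c from a to b.\<close>
definition clen :: "'a list \<Rightarrow> 'a \<Rightarrow> 'a \<Rightarrow> nat" where
  "clen c a b = (cidx c b + length c - cidx c a) mod length c"

definition csubpath :: "'a list \<Rightarrow> 'a list \<Rightarrow> bool" where
  "csubpath c p \<longleftrightarrow> p \<noteq> [] \<and> distinct p \<and> set p \<subseteq> set c \<and>
     (\<forall>i. Suc i < length p \<longrightarrow> clen c (p ! i) (p ! Suc i) = 1)"

definition k_suitable :: "'a set \<Rightarrow> ('a \<times> 'a) set \<Rightarrow> nat \<Rightarrow> 'a list set \<Rightarrow> bool" where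
  "k_suitable V E k CC \<longleftrightarrow>
     (\<forall>C \<in> CC. dcycle V E C \<and> length C \<ge> 8 * k) \<and>
     (\<forall>Ci \<in> CC. \<forall>Cj \<in> CC. Ci \<noteq> Cj \<longrightarrow>
        set Ci \<inter> set Cj = {} \<or>
        (\<exists>P. csubpath Ci P \<and> csubpath Cj P \<and> set P = set Ci \<inter> set Cj \<and> length P \<le> k))"

definition has_B_subdivision :: "('a \<times> 'a) set \<Rightarrow> nat \<Rightarrow> nat \<Rightarrow> nat \<Rightarrow> bool" where
  "has_B_subdivision E k1 k2 k3 \<longleftrightarrow>
     (\<exists>u w P1 P2 P3. u \<noteq> w \<and> dpath E P1 \<and> dpath E P2 \<and> dpath E P3 \<and> P1 \<noteq> P2 \<and>
        hd P1 = u \<and> last P1 = w \<and> hd P2 = u \<and> last P2 = w \<and> hd P3 = w \<and> last P3 = u \<and>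
        plen P1 \<ge> k1 \<and> plen P2 \<ge> k2 \<and> plen P3 \<ge> k3 \<and>
        set P1 \<inter> set P2 \<subseteq> {u, w} \<and> set P1 \<inter> set P3 \<subseteq> {u, w} \<and> set P2 \<inter> set P3 \<subseteq> {u, w})"

end

theory Submission
  imports Defs
begin


lemma cidx_props:
  assumes "distinct c" "a \<in> set c"
  shows "cidx c a < length c \<and> c ! cidx c a = a"
proof -
  obtain i where i: "i < length c" "c ! i = a" using assms(2) by (auto simp: in_set_conv_nth)
  have "cidx c a = i" unfolding cidx_def
    apply (rule the_equality) using i assms(1) by (auto simp: nth_eq_iff_index_eq)
  thus ?thesis using i by simp
qed

lemma cidx_nth: "distinct c \<Longrightarrow> i < length c \<Longrightarrow> cidx c (c ! i) = i"
  unfolding cidx_def by (rule the_equality) (auto simp: nth_eq_iff_index_eq)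

lemma clen_lt: "a \<in> set c \<Longrightarrow> clen c a b < length c"
  unfolding clen_def by (cases c) auto

lemma clen_self[simp]: "clen c a a = 0"
  unfolding clen_def by simp

lemma clen_add:
  assumes "distinct c" "a \<in> set c" "b \<in> set c" "x \<in> set c"
  shows "clen c a x = (clen c a b + clen c b x) mod length c"
proof -
  obtain n where n_def: "n = length c" by simp
  obtain ia ib ix where d: "ia = cidx c a" "ib = cidx c b" "ix = cidx c x" by simp
  have ia: "ia < n" using cidx_props[OF assms(1,2)] n_def d by simp
  have ib: "ib < n" using cidx_props[OF assms(1,3)] n_def d by simp
  have ix: "ix < n" using cidx_props[OF assms(1,4)] n_def d by simp
  have c1: "clen c a b = (ib + n - ia) mod n" "clen c b x = (ix + n - ib) mod n"
     "clen c a x = (ix + n - ia) mod n" unfolding clen_def d n_def by auto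
  have "((ib + n - ia) mod n + (ix + n - ib) mod n) mod n = ((ib + n - ia) + (ix + n - ib)) mod n"
    by (rule mod_add_eq)
  also have "(ib + n - ia) + (ix + n - ib) = (ix + n - ia) + n"
    using ia ib ix by simp
  also have "((ix + n - ia) + n) mod n = (ix + n - ia) mod n"
    by (rule mod_add_self2)
  finally show ?thesis using c1 n_def by simp
qed

lemma clen_0_iff:
  assumes "distinct c" "a \<in> set c" "b \<in> set c"
  shows "clen c a b = 0 \<longleftrightarrow> a = b"
proof
  assume h: "clen c a b = 0"
  define n where "n = length c"
  have ia: "cidx c a < n" using cidx_props[OF assms(1,2)] n_def by simp
  have ib: "cidx c b < n" using cidx_props[OF assms(1,3)] n_def by simp
  have "(cidx c b + n - cidx c a) mod n = 0" using h unfolding clen_def n_def by simp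
  hence "cidx c b = cidx c a"
  proof (cases "cidx c b < cidx c a")
    case True
    hence "cidx c b + n - cidx c a < n" "0 < cidx c b + n - cidx c a" using ia by auto
    thus ?thesis using \<open>(cidx c b + n - cidx c a) mod n = 0\<close> by simp
  next
    case False
    hence "cidx c b + n - cidx c a = (cidx c b - cidx c a) + n" by simp
    hence "(cidx c b - cidx c a) mod n = 0" using \<open>(cidx c b + n - cidx c a) mod n = 0\<close> by simp
    moreover have "cidx c b - cidx c a < n" using ib by simp
    ultimately show ?thesis using False by simp
  qed
  thus "a = b" using cidx_props[OF assms(1,2)] cidx_props[OF assms(1,3)] by metis
qed simp

lemma clen_tri:
  assumes "distinct c" "a \<in> set c" "b \<in> set c" "x \<in> set c" "clen c a b \<le> clen c a x"
  shows "clen c a x = clen c a b + clen c b x"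
proof -
  have e: "clen c a x = (clen c a b + clen c b x) mod length c" using clen_add[OF assms(1-4)] .
  have l1: "clen c b x < length c" "clen c a x < length c" "clen c a b < length c" using clen_lt[OF assms(3)] clen_lt[OF assms(2)] by auto
  show ?thesis
  proof (cases "clen c a b + clen c b x < length c")
    case True then show ?thesis using e by simp
  next
    case False
    hence "clen c a x = clen c a b + clen c b x - length c" using e l1
      by (simp add: le_mod_geq)
    thus ?thesis using assms(5) l1 False by linarith
  qed
qed

lemma clen_sum:
  assumes "distinct c" "a \<in> set c" "b \<in> set c" "a \<noteq> b"
  shows "clen c a b + clen c b a = length c"
proof -
  have e: "(clen c a b + clen c b a) mod length c = 0"
    using clen_add[OF assms(1,2,3,2)] by simp
  have p: "clen c a b \<noteq> 0" using clen_0_iff[OF assms(1,2,3)] assms(4) by simp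
  have l: "clen c a b < length c" "clen c b a < length c" using clen_lt[OF assms(2)] clen_lt[OF assms(3)] by blast+
  show ?thesis
  proof (cases "clen c a b + clen c b a < length c")
    case True
    then show ?thesis using e p by simp
  next
    case False
    hence "(clen c a b + clen c b a) mod length c = clen c a b + clen c b a - length c"
      using l by (simp add: le_mod_geq)
    then show ?thesis using e l False by simp
  qed
qed


lemma clen_inj:
  assumes "distinct c" "a \<in> set c" "x \<in> set c" "y \<in> set c" "clen c a x = clen c a y"
  shows "x = y"
proof -
  have "clen c a y = clen c a x + clen c x y" using clen_tri[OF assms(1,2,3,4)] assms(5) by simp
  hence "clen c x y = 0" using assms(5) by simp
  thus ?thesis using clen_0_iff[OF assms(1,3,4)] by simp
qed

lemma out_in:
  assumes "distinct c" "s \<in> set c" "x \<in> set c" "y \<in> set c" "clen c s x > l" "clen c s y \<le> l"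
  shows "clen c x y = clen c x s + clen c s y"
proof (cases "clen c x s \<le> clen c x y")
  case True
  then show ?thesis using clen_tri[OF assms(1,3,2,4)] by simp
next
  case False
  have t: "clen c x s = clen c x y + clen c y s" using clen_tri[OF assms(1,3,4,2)] False by simp
  show ?thesis
  proof (cases "y = s")
    case True then show ?thesis by simp
  next
    case ys: False
    have xs: "x \<noteq> s" using assms(5,6) by auto
    have "clen c s y + clen c y s = length c" using clen_sum[OF assms(1,2,4)] ys by simp
    moreover have "clen c s x + clen c x s = length c" using clen_sum[OF assms(1,2,3)] xs by simp
    ultimately show ?thesis using t assms(5,6) by linarith
  qed
qed

lemma in_out:
  assumes "distinct c" "s \<in> set c" "t \<in> set c" "x \<in> set c" "y \<in> set c"
    "clen c s t = l" "clen c s x > l" "clen c s y \<le> l"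
  shows "clen c y x = clen c y t + clen c t x"
proof -
  have 1: "clen c s t = clen c s y + clen c y t" using clen_tri[OF assms(1,2,5,3)] assms(6,8) by simp
  have 2: "clen c s x = clen c s t + clen c t x" using clen_tri[OF assms(1,2,3,4)] assms(6,7) by simp
  have 3: "clen c s x = clen c s y + clen c y x" using clen_tri[OF assms(1,2,5,4)] assms(7,8) by simp
  show ?thesis using 1 2 3 by linarith
qed

lemma rev_iv:
  assumes "distinct c" "s \<in> set c" "t \<in> set c" "x \<in> set c" "z \<in> set c"
    "clen c s t = l" "clen c s x \<le> l" "x \<noteq> t" "clen c s z > l"
  shows "clen c t z < clen c t x"
proof -
  have 1: "clen c s z = l + clen c t z" using clen_tri[OF assms(1,2,3,5)] assms(6,9) by simp
  have 2: "clen c s z < length c" using clen_lt[OF assms(2)] by simp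
  have 3: "clen c s t = clen c s x + clen c x t" using clen_tri[OF assms(1,2,4,3)] assms(6,7) by simp
  have 4: "clen c t x + clen c x t = length c" using clen_sum[OF assms(1,3,4)] assms(8) by simp
  show ?thesis using 1 2 3 4 assms(6) by linarith
qed

lemma out_sum:
  assumes "distinct c" "s \<in> set c" "t \<in> set c" "z \<in> set c"
    "clen c s t = l" "clen c s z > l"
  shows "clen c t z + clen c z s + l = length c"
proof -
  have 1: "clen c s z = l + clen c t z" using clen_tri[OF assms(1,2,3,4)] assms(5,6) by simp
  have "s \<noteq> z" using assms(6) by auto
  hence 2: "clen c s z + clen c z s = length c" using clen_sum[OF assms(1,2,4)] by simp
  show ?thesis using 1 2 by linarith
qed

definition seg :: "'a list \<Rightarrow> 'a \<Rightarrow> nat \<Rightarrow> 'a list" where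
  "seg c a m = map (\<lambda>j. c ! ((cidx c a + j) mod length c)) [0..<Suc m]"

lemma seg_nth_clen:
  assumes "distinct c" "a \<in> set c"
  shows "clen c a (c ! ((cidx c a + j) mod length c)) = j mod length c"
proof -
  have n: "length c > 0" using assms(2) by (cases c) auto
  have ia: "cidx c a < length c" using cidx_props[OF assms] by simp
  have "cidx c (c ! ((cidx c a + j) mod length c)) = (cidx c a + j) mod length c"
    using cidx_nth[OF assms(1)] n by simp
  hence "clen c a (c ! ((cidx c a + j) mod length c)) = ((cidx c a + j) mod length c + length c - cidx c a) mod length c"
    unfolding clen_def by simp
  also have "\<dots> = j mod length c"
  proof -
    have "((cidx c a + j) mod length c + length c - cidx c a) mod length c
        = (((cidx c a + j) mod length c + (length c - cidx c a)) mod length c)" using ia by simp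
    also have "\<dots> = ((cidx c a + j) + (length c - cidx c a)) mod length c" by (simp add: mod_add_left_eq)
    also have "(cidx c a + j) + (length c - cidx c a) = j + length c" using ia by simp
    finally show ?thesis by simp
  qed
  finally show ?thesis .
qed

lemma seg_in: "distinct c \<Longrightarrow> a \<in> set c \<Longrightarrow> c ! ((cidx c a + j) mod length c) \<in> set c"
proof -
  assume "a \<in> set c"
  hence "length c > 0" by (cases c) auto
  thus ?thesis using nth_mem[of "(cidx c a + j) mod length c" c] by simp
qed

lemma seg_pos:
  assumes "distinct c" "a \<in> set c" "x \<in> set c"
  shows "c ! ((cidx c a + clen c a x) mod length c) = x"
proof -
  have "clen c a (c ! ((cidx c a + clen c a x) mod length c)) = clen c a x"
    using seg_nth_clen[OF assms(1,2)] clen_lt[OF assms(2)] by simp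
  thus ?thesis using clen_inj[OF assms(1,2) seg_in[OF assms(1,2)] assms(3)] by blast
qed

lemma seg_length[simp]: "length (seg c a m) = Suc m" by (simp add: seg_def)
lemma plen_seg[simp]: "plen (seg c a m) = m" by (simp add: seg_def plen_def)
lemma seg_hd:
  assumes "distinct c" "a \<in> set c" shows "hd (seg c a m) = a"
proof -
  have h: "cidx c a < length c" "c ! cidx c a = a" using cidx_props[OF assms] by auto
  have "hd (seg c a m) = c ! (cidx c a mod length c)" by (simp add: seg_def hd_map del: upt_Suc)
  also have "\<dots> = a" using h by simp
  finally show ?thesis .
qed

lemma seg_nth: "j \<le> m \<Longrightarrow> seg c a m ! j = c ! ((cidx c a + j) mod length c)"
  unfolding seg_def by (simp del: upt_Suc)

lemma seg_last:
  assumes "distinct c" "a \<in> set c" "b \<in> set c"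
  shows "last (seg c a (clen c a b)) = b"
proof -
  have ne: "seg c a (clen c a b) \<noteq> []" using seg_length[of c a "clen c a b"] by (metis Zero_not_Suc list.size(3))
  have "last (seg c a (clen c a b)) = seg c a (clen c a b) ! (clen c a b)"
    using last_conv_nth[OF ne] by simp
  also have "\<dots> = b" using seg_nth[of "clen c a b" "clen c a b" c a] seg_pos[OF assms] by simp
  finally show ?thesis .
qed

lemma seg_set:
  assumes "distinct c" "a \<in> set c" "m < length c"
  shows "set (seg c a m) = {x \<in> set c. clen c a x \<le> m}"
proof
  show "set (seg c a m) \<subseteq> {x \<in> set c. clen c a x \<le> m}"
  proof
    fix x assume "x \<in> set (seg c a m)"
    then obtain j where "j < Suc m" "x = seg c a m ! j" by (metis in_set_conv_nth seg_length)
    hence j: "j \<le> m" "x = c ! ((cidx c a + j) mod length c)" using seg_nth[of j m c a] by auto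
    thus "x \<in> {x \<in> set c. clen c a x \<le> m}"
      using seg_in[OF assms(1,2)] seg_nth_clen[OF assms(1,2), of j] assms(3) by simp
  qed
next
  show "{x \<in> set c. clen c a x \<le> m} \<subseteq> set (seg c a m)"
  proof
    fix x assume x: "x \<in> {x \<in> set c. clen c a x \<le> m}"
    hence "seg c a m ! (clen c a x) = x" using seg_nth[of "clen c a x" m c a] seg_pos[OF assms(1,2), of x] by simp
    moreover have "clen c a x < length (seg c a m)" using x by simp
    ultimately show "x \<in> set (seg c a m)" by (metis nth_mem)
  qed
qed

lemma seg_distinct:
  assumes "distinct c" "a \<in> set c" "m < length c"
  shows "distinct (seg c a m)"
proof -
  have "\<And>i j. i < Suc m \<Longrightarrow> j < Suc m \<Longrightarrow> seg c a m ! i = seg c a m ! j \<Longrightarrow> i = j"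
  proof -
    fix i j assume h: "i < Suc m" "j < Suc m" "seg c a m ! i = seg c a m ! j"
    have "clen c a (seg c a m ! i) = i mod length c" using h(1) seg_nth[of i m c a] seg_nth_clen[OF assms(1,2), of i] by simp
    moreover have "clen c a (seg c a m ! j) = j mod length c" using h(2) seg_nth[of j m c a] seg_nth_clen[OF assms(1,2), of j] by simp
    moreover have "i mod length c = i" "j mod length c = j" using h(1,2) assms(3) by auto
    ultimately show "i = j" using h(3) by metis
  qed
  thus ?thesis unfolding distinct_conv_nth seg_length by blast
qed

lemma seg_dpath:
  assumes "dcycle V E c" "a \<in> set c" "m < length c"
  shows "dpath E (seg c a m)"
proof -
  have d: "distinct c" using assms(1) by (simp add: dcycle_def)
  have n: "length c > 0" using assms(2) by (cases c) auto
  have "\<And>i. Suc i < Suc m \<Longrightarrow> (seg c a m ! i, seg c a m ! Suc i) \<in> E"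
  proof -
    fix i assume i: "Suc i < Suc m"
    let ?r = "(cidx c a + i) mod length c"
    have "(c ! ?r, c ! ((?r + 1) mod length c)) \<in> E" using assms(1) n by (simp add: dcycle_def)
    moreover have "(?r + 1) mod length c = (cidx c a + Suc i) mod length c" by (simp add: mod_Suc_eq)
    ultimately show "(seg c a m ! i, seg c a m ! Suc i) \<in> E" using i seg_nth[of i m c a] seg_nth[of "Suc i" m c a] by simp
  qed
  thus ?thesis unfolding dpath_def using seg_distinct[OF d assms(2,3)] by (simp add: seg_def del: upt_Suc)
qed


lemma csub_clen:
  assumes "distinct c" "csubpath c P" "length P \<le> length c"
  shows "i < length P \<Longrightarrow> clen c (hd P) (P ! i) = i"
proof (induction i)
  case 0
  have "P \<noteq> []" using assms(2) by (simp add: csubpath_def)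
  then show ?case by (simp add: hd_conv_nth)
next
  case (Suc i)
  have ne: "P \<noteq> []" and sub: "set P \<subseteq> set c" using assms(2) by (auto simp: csubpath_def)
  have h: "hd P \<in> set c" using ne sub hd_in_set by blast
  have pi: "P ! i \<in> set c" using Suc.prems sub nth_mem[of i P] by auto
  have pi1: "P ! Suc i \<in> set c" using Suc.prems sub nth_mem[of "Suc i" P] by auto
  have st: "clen c (P ! i) (P ! Suc i) = 1" using assms(2) Suc.prems by (simp add: csubpath_def)
  have "clen c (hd P) (P ! Suc i) = (clen c (hd P) (P ! i) + clen c (P ! i) (P ! Suc i)) mod length c"
    using clen_add[OF assms(1) h pi pi1] .
  also have "\<dots> = Suc i mod length c" using Suc.IH Suc.prems st by simp
  also have "\<dots> = Suc i" using Suc.prems assms(3) by simp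
  finally show ?case .
qed

lemma csub_set:
  assumes "distinct c" "csubpath c P" "length P \<le> length c"
  shows "x \<in> set P \<longleftrightarrow> x \<in> set c \<and> clen c (hd P) x \<le> plen P"
    and "clen c (hd P) (last P) = plen P"
proof -
  have ne: "P \<noteq> []" and sub: "set P \<subseteq> set c" using assms(2) by (auto simp: csubpath_def)
  have h: "hd P \<in> set c" using ne sub hd_in_set by blast
  show "clen c (hd P) (last P) = plen P"
    using csub_clen[OF assms, of "length P - 1"] ne by (simp add: last_conv_nth plen_def)
  show "x \<in> set P \<longleftrightarrow> x \<in> set c \<and> clen c (hd P) x \<le> plen P"
  proof
    assume "x \<in> set P"
    then obtain i where i: "i < length P" "P ! i = x" by (auto simp: in_set_conv_nth)
    thus "x \<in> set c \<and> clen c (hd P) x \<le> plen P"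
      using csub_clen[OF assms i(1)] sub nth_mem[OF i(1)] by (auto simp: plen_def)
  next
    assume x: "x \<in> set c \<and> clen c (hd P) x \<le> plen P"
    define j where "j = clen c (hd P) x"
    have jl: "j < length P" using x ne unfolding j_def plen_def by (cases P) auto
    have "clen c (hd P) (P ! j) = j" using csub_clen[OF assms jl] .
    moreover have "P ! j \<in> set c" using sub nth_mem[OF jl] by auto
    ultimately have "P ! j = x" using clen_inj[OF assms(1) h] x j_def by metis
    thus "x \<in> set P" using nth_mem[OF jl] by simp
  qed
qed

lemma dpath_app:
  assumes "dpath E P" "dpath E Q" "last P = hd Q" "set P \<inter> set Q \<subseteq> {hd Q}"
  shows "dpath E (P @ tl Q)" "hd (P @ tl Q) = hd P" "last (P @ tl Q) = last Q"
    "set (P @ tl Q) = set P \<union> set Q" "plen (P @ tl Q) = plen P + plen Q"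
proof -
  have pne: "P \<noteq> []" and qne: "Q \<noteq> []" and dP: "distinct P" and dQ: "distinct Q"
    using assms(1,2) by (auto simp: dpath_def)
  obtain q qs where Q: "Q = q # qs" using qne by (cases Q) auto
  have sQ: "set Q = insert q (set qs)" using Q by simp
  show "hd (P @ tl Q) = hd P" using pne by simp
  show "last (P @ tl Q) = last Q" using Q assms(3) pne by (cases qs) auto
  show "set (P @ tl Q) = set P \<union> set Q" using Q assms(3) last_in_set[OF pne] by auto
  show "plen (P @ tl Q) = plen P + plen Q" using Q pne by (cases P) (auto simp: plen_def)
  have dist: "distinct (P @ tl Q)" using dP dQ Q assms(4) by auto
  have edges: "\<And>i. Suc i < length (P @ tl Q) \<Longrightarrow> ((P @ tl Q) ! i, (P @ tl Q) ! Suc i) \<in> E"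
  proof -
    fix i assume i: "Suc i < length (P @ tl Q)"
    consider (a) "Suc i < length P" | (b) "Suc i = length P" | (c) "Suc i > length P" by linarith
    then show "((P @ tl Q) ! i, (P @ tl Q) ! Suc i) \<in> E"
    proof cases
      case a then show ?thesis using assms(1) by (simp add: nth_append dpath_def)
    next
      case b
      have "i = length P - 1" using b by simp
      hence "(P @ tl Q) ! i = last P" using b pne by (simp add: nth_append last_conv_nth)
      moreover have "(P @ tl Q) ! Suc i = Q ! 1" using b Q by (simp add: nth_append)
      moreover have "Q ! 0 = hd Q" using Q by simp
      moreover have "Suc 0 < length Q" using i b Q by simp
      ultimately show ?thesis using assms(2,3) by (auto simp: dpath_def)
    next
      case c
      have "(P @ tl Q) ! i = Q ! (i - length P + 1)" using c Q by (simp add: nth_append)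
      moreover have "(P @ tl Q) ! Suc i = Q ! Suc (i - length P + 1)" using c Q
        by (simp add: nth_append Suc_diff_le)
      moreover have "Suc (i - length P + 1) < length Q" using i c Q by simp
      ultimately show ?thesis using assms(2) by (auto simp: dpath_def)
    qed
  qed
  show "dpath E (P @ tl Q)" using dist edges pne by (simp add: dpath_def)
qed

lemma ear:
  assumes C: "dcycle V E C" and p: "p \<in> set C" and q: "q \<in> set C" and pq: "p \<noteq> q"
    and Q: "dpath E Q" "hd Q = p" "last Q = q" "set Q \<inter> set C \<subseteq> {p, q}"
    and y: "y \<in> set Q" "y \<notin> set C"
    and k1: "k \<le> clen C q p" and k2: "k \<le> clen C p q \<or> k \<le> plen Q" and k0: "0 < k"
  shows "has_B_subdivision E k 1 k"
proof -
  have d: "distinct C" using C by (simp add: dcycle_def)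
  define S where "S = seg C p (clen C p q)"
  define R where "R = seg C q (clen C q p)"
  have lt1: "clen C p q < length C" using clen_lt[OF p] .
  have lt2: "clen C q p < length C" using clen_lt[OF q] .
  have dS: "dpath E S" unfolding S_def using seg_dpath[OF C p lt1] .
  have dR: "dpath E R" unfolding R_def using seg_dpath[OF C q lt2] .
  have hS: "hd S = p" "last S = q" unfolding S_def using seg_hd[OF d p] seg_last[OF d p q] by auto
  have hR: "hd R = q" "last R = p" unfolding R_def using seg_hd[OF d q] seg_last[OF d q p] by auto
  have sS: "set S = {x \<in> set C. clen C p x \<le> clen C p q}" unfolding S_def using seg_set[OF d p lt1] .
  have sR: "set R = {x \<in> set C. clen C q x \<le> clen C q p}" unfolding R_def using seg_set[OF d q lt2] .
  have pS: "plen S = clen C p q" "plen R = clen C q p" unfolding S_def R_def by simp_all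
  have SR: "set S \<inter> set R \<subseteq> {p, q}"
  proof
    fix x assume x: "x \<in> set S \<inter> set R"
    show "x \<in> {p, q}"
    proof (rule ccontr)
      assume nx: "x \<notin> {p, q}"
      have xC: "x \<in> set C" and x1: "clen C p x \<le> clen C p q" and x2: "clen C q x \<le> clen C q p"
        using x sS sR by auto
      have t: "clen C p q = clen C p x + clen C x q" using clen_tri[OF d p xC q x1] .
      have s1: "clen C q x + clen C x q = length C" using clen_sum[OF d q xC] nx by auto
      have s2: "clen C p q + clen C q p = length C" using clen_sum[OF d p q pq] .
      have "clen C p x \<noteq> 0" using clen_0_iff[OF d p xC] nx by auto
      thus False using t s1 s2 x2 by linarith
    qed
  qed
  have QS: "set Q \<inter> set S \<subseteq> {p, q}" using Q(4) sS by auto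
  have QR: "set Q \<inter> set R \<subseteq> {p, q}" using Q(4) sR by auto
  have SQ: "S \<noteq> Q" using y sS by auto
  have pS1: "plen S \<ge> 1" using pS clen_0_iff[OF d p q] pq by auto
  have pQ1: "plen Q \<ge> 1"
  proof -
    have "Q \<noteq> []" using Q(1) by (simp add: dpath_def)
    hence "length Q \<noteq> 1" using Q(2,3) pq by (cases Q) auto
    thus ?thesis using \<open>Q \<noteq> []\<close> by (cases Q) (auto simp: plen_def Suc_le_eq)
  qed
  show ?thesis
  proof (cases "k \<le> clen C p q")
    case True
    show ?thesis unfolding has_B_subdivision_def
      apply (rule exI[of _ p], rule exI[of _ q], rule exI[of _ S], rule exI[of _ Q], rule exI[of _ R])
      using pq dS Q dR SQ hS hR True pS pQ1 k1 SR QS QR by (auto simp: Int_commute)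
  next
    case False
    hence kQ: "k \<le> plen Q" using k2 by simp
    show ?thesis unfolding has_B_subdivision_def
      apply (rule exI[of _ p], rule exI[of _ q], rule exI[of _ Q], rule exI[of _ S], rule exI[of _ R])
      using pq dS Q dR SQ hS hR kQ pS pS1 k1 SR QS QR by (auto simp: Int_commute)
  qed
qed



lemma pair_len:
  assumes "k_suitable V E k CC" "Ci \<in> CC" "Cj \<in> CC" "Ci \<noteq> Cj"
    "set Ci \<inter> set Cj \<noteq> {}" "csubpath Ci P" "set P = set Ci \<inter> set Cj"
  shows "length P \<le> k"
proof -
  obtain R where R: "csubpath Ci R" "set R = set Ci \<inter> set Cj" "length R \<le> k"
    using assms(1-5) unfolding k_suitable_def by blast
  have "distinct P" "distinct R" using assms(6) R(1) by (auto simp: csubpath_def)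
  hence "length P = length R" using R(2) assms(7) distinct_card by metis
  thus ?thesis using R(3) by simp
qed

lemma get_pair:
  assumes "k_suitable V E k CC" "Ci \<in> CC" "Cj \<in> CC" "Ci \<noteq> Cj" "set Ci \<inter> set Cj \<noteq> {}"
  obtains P where "csubpath Ci P" "csubpath Cj P" "set P = set Ci \<inter> set Cj" "length P \<le> k"
  using assms unfolding k_suitable_def by blast

lemma cyc_info:
  assumes "k_suitable V E k CC" "C \<in> CC"
  shows "dcycle V E C" "distinct C" "8 * k \<le> length C"
  using assms unfolding k_suitable_def dcycle_def by auto

lemma path_info:
  assumes "distinct c" "csubpath c P" "length P \<le> k" "8 * k \<le> length c" "0 < k"
  shows "hd P \<in> set c" "last P \<in> set c" "clen c (hd P) (last P) = plen P"
    "\<And>x. x \<in> set P \<longleftrightarrow> x \<in> set c \<and> clen c (hd P) x \<le> plen P" "plen P < k"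
proof -
  have le: "length P \<le> length c" using assms(3,4) by linarith
  have ne: "P \<noteq> []" and sub: "set P \<subseteq> set c" using assms(2) by (auto simp: csubpath_def)
  show "hd P \<in> set c" "last P \<in> set c" using ne sub by auto
  show "clen c (hd P) (last P) = plen P" using csub_set(2)[OF assms(1,2) le] .
  show "\<And>x. x \<in> set P \<longleftrightarrow> x \<in> set c \<and> clen c (hd P) x \<le> plen P" using csub_set(1)[OF assms(1,2) le] .
  show "plen P < k" using assms(3,5) ne by (cases P) (auto simp: plen_def)
qed

theorem mainTheorem12:
  fixes V :: "'a set" and E :: "('a \<times> 'a) set" and k :: nat and CC :: "'a list set"
    and C1 C2 C3 P12 P13 :: "'a list" and v :: 'a
  assumes "k > 0"
    and "digraph V E"
    and "\<not> has_B_subdivision E k 1 k"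
    and "k_suitable V E k CC"
    and "C1 \<in> CC" "C2 \<in> CC" "C3 \<in> CC"
    and "C1 \<noteq> C2" "C1 \<noteq> C3" "C2 \<noteq> C3"
    and "set C1 \<inter> set C2 \<noteq> {}" "set C1 \<inter> set C3 \<noteq> {}" "set C2 \<inter> set C3 \<noteq> {}"
    and "v \<in> (set C2 \<inter> set C3) - set C1"
    and "csubpath C1 P12" "csubpath C2 P12" "set P12 = set C1 \<inter> set C2"
    and "csubpath C1 P13" "csubpath C3 P13" "set P13 = set C1 \<inter> set C3"
  shows "(clen C2 (last P12) v < 3 * k \<and> clen C3 (last P13) v < 3 * k) \<noteq>
         (clen C2 v (hd P12) < 3 * k \<and> clen C3 v (hd P13) < 3 * k)"
proof -
  note kp = assms(1)
  have c1: "dcycle V E C1" "distinct C1" "8 * k \<le> length C1" using cyc_info[OF assms(4,5)] by auto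
  have c2: "dcycle V E C2" "distinct C2" "8 * k \<le> length C2" using cyc_info[OF assms(4,6)] by auto
  have c3: "dcycle V E C3" "distinct C3" "8 * k \<le> length C3" using cyc_info[OF assms(4,7)] by auto
  have d1: "distinct C1" and d2: "distinct C2" and d3: "distinct C3" using c1 c2 c3 by auto
  obtain P23 where P23: "csubpath C2 P23" "csubpath C3 P23" "set P23 = set C2 \<inter> set C3" "length P23 \<le> k"
    using get_pair[OF assms(4,6,7,10,13)] by blast
  have L12: "length P12 \<le> k" using pair_len[OF assms(4,5,6,8,11,15,17)] .
  have L13: "length P13 \<le> k" using pair_len[OF assms(4,5,7,9,12,18,20)] .
  obtain s12 t12 l12 where st12: "s12 = hd P12" "t12 = last P12" "l12 = plen P12" by simp
  obtain s13 t13 l13 where st13: "s13 = hd P13" "t13 = last P13" "l13 = plen P13" by simp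
  obtain s23 t23 l23 where st23: "s23 = hd P23" "t23 = last P23" "l23 = plen P23" by simp
  note i12a = path_info[OF d1 assms(15) L12 c1(3) kp, folded st12]
  note i12b = path_info[OF d2 assms(16) L12 c2(3) kp, folded st12]
  note i13a = path_info[OF d1 assms(18) L13 c1(3) kp, folded st13]
  note i13b = path_info[OF d3 assms(19) L13 c3(3) kp, folded st13]
  note i23a = path_info[OF d2 P23(1) P23(4) c2(3) kp, folded st23]
  note i23b = path_info[OF d3 P23(2) P23(4) c3(3) kp, folded st23]
  have vC2: "v \<in> set C2" and vC3: "v \<in> set C3" and vC1: "v \<notin> set C1" using assms(14) by auto
  have m12: "\<And>x. x \<in> set C1 \<and> x \<in> set C2 \<longleftrightarrow> x \<in> set P12" using assms(17) by auto
  have m13: "\<And>x. x \<in> set C1 \<and> x \<in> set C3 \<longleftrightarrow> x \<in> set P13" using assms(20) by auto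
  have m23: "\<And>x. x \<in> set C2 \<and> x \<in> set C3 \<longleftrightarrow> x \<in> set P23" using P23(3) by auto
  have v12: "clen C2 s12 v > l12" using i12b(4)[of v] m12[of v] vC1 vC2 by auto
  have ab: "clen C2 t12 v + clen C2 v s12 + l12 = length C2"
    using out_sum[OF d2 i12b(1) i12b(2) vC2 i12b(3) v12] .
  have v13: "clen C3 s13 v > l13" using i13b(4)[of v] m13[of v] vC1 vC3 by auto
  have ab3: "clen C3 t13 v + clen C3 v s13 + l13 = length C3"
    using out_sum[OF d3 i13b(1) i13b(2) vC3 i13b(3) v13] .
  have vP23: "v \<in> set P23" using m23 vC2 vC3 by auto
  have v23a: "clen C2 s23 v \<le> l23" using i23a(4)[of v] vP23 by auto
  have v23b: "clen C3 s23 v \<le> l23" using i23b(4)[of v] vP23 by auto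
  have same23: "\<And>x. x \<in> set P23 \<Longrightarrow> clen C2 s23 x = clen C3 s23 x"
  proof -
    fix x assume x: "x \<in> set P23"
    then obtain i where i: "i < length P23" "P23 ! i = x" by (auto simp: in_set_conv_nth)
    have l2: "length P23 \<le> length C2" and l3: "length P23 \<le> length C3" using P23(4) c2(3) c3(3) by linarith+
    show "clen C2 s23 x = clen C3 s23 x"
      using csub_clen[OF d2 P23(1) l2 i(1)] csub_clen[OF d3 P23(2) l3 i(1)] i(2) st23(1) by simp
  qed
  have notboth: "\<not> ((clen C2 (last P12) v < 3 * k \<and> clen C3 (last P13) v < 3 * k) \<and>
         (clen C2 v (hd P12) < 3 * k \<and> clen C3 v (hd P13) < 3 * k))"
    using ab c2(3) i12b(5) st12 by auto
  have oneof: "(clen C2 t12 v < 3 * k \<and> clen C3 t13 v < 3 * k) \<or>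
         (clen C2 v s12 < 3 * k \<and> clen C3 v s13 < 3 * k)"
  proof (cases "\<exists>z. z \<in> set C1 \<and> z \<in> set C2 \<and> z \<in> set C3")
    case True
    then obtain z where z: "z \<in> set C1" "z \<in> set C2" "z \<in> set C3" by blast
    have zP12: "clen C2 s12 z \<le> l12" using i12b(4)[of z] m12[of z] z by auto
    have zP13: "clen C3 s13 z \<le> l13" using i13b(4)[of z] m13[of z] z by auto
    have zP23: "z \<in> set P23" using m23 z by auto
    have z23a: "clen C2 s23 z \<le> l23" using i23a(4)[of z] zP23 by auto
    have zv: "z \<noteq> v" using z vC1 by auto
    have eqz: "clen C2 s23 z = clen C3 s23 z" using same23[OF zP23] .
    have eqv: "clen C2 s23 v = clen C3 s23 v" using same23[OF vP23] .
    have neq: "clen C2 s23 z \<noteq> clen C2 s23 v"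
      using clen_inj[OF d2 i23a(1) z(2) vC2] zv by blast
    show ?thesis
    proof (cases "clen C2 s23 z < clen C2 s23 v")
      case True
      have t2: "clen C2 s23 v = clen C2 s23 z + clen C2 z v"
        using clen_tri[OF d2 i23a(1) z(2) vC2] True by simp
      have t3: "clen C3 s23 v = clen C3 s23 z + clen C3 z v"
        using clen_tri[OF d3 i23b(1) z(3) vC3] True eqz eqv by simp
      have e2: "clen C2 z v = clen C2 z t12 + clen C2 t12 v"
        using in_out[OF d2 i12b(1) i12b(2) vC2 z(2) i12b(3) v12 zP12] .
      have e3: "clen C3 z v = clen C3 z t13 + clen C3 t13 v"
        using in_out[OF d3 i13b(1) i13b(2) vC3 z(3) i13b(3) v13 zP13] .
      have "clen C2 t12 v < k" using t2 e2 v23a i23a(5) by linarith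
      moreover have "clen C3 t13 v < k" using t3 e3 v23b i23b(5) by linarith
      ultimately show ?thesis by simp
    next
      case False
      hence lt: "clen C2 s23 v < clen C2 s23 z" using neq by simp
      have t2: "clen C2 s23 z = clen C2 s23 v + clen C2 v z"
        using clen_tri[OF d2 i23a(1) vC2 z(2)] lt by simp
      have t3: "clen C3 s23 z = clen C3 s23 v + clen C3 v z"
        using clen_tri[OF d3 i23b(1) vC3 z(3)] lt eqz eqv by simp
      have e2: "clen C2 v z = clen C2 v s12 + clen C2 s12 z"
        using out_in[OF d2 i12b(1) vC2 z(2) v12 zP12] .
      have e3: "clen C3 v z = clen C3 v s13 + clen C3 s13 z"
        using out_in[OF d3 i13b(1) vC3 z(3) v13 zP13] .
      have z23b: "clen C3 s23 z \<le> l23" using eqz z23a by simp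
      have "clen C2 v s12 < k" using t2 e2 z23a i23a(5) by linarith
      moreover have "clen C3 v s13 < k" using t3 e3 z23b i23b(5) by linarith
      ultimately show ?thesis by simp
    qed
  next
    case False
    note noT = False
    have s13n: "s13 \<notin> set C2" using noT i13a(1) i13b(1) by blast
    have t13n: "t13 \<notin> set C2" using noT i13a(2) i13b(2) by blast
    have t12n: "t12 \<notin> set C3" using noT i12a(2) i12b(2) by blast
    have s12n: "s12 \<notin> set C3" using noT i12a(1) i12b(1) by blast
    have s23n: "s23 \<notin> set C1" using noT i23a(1) i23b(1) by blast
    have t23n: "t23 \<notin> set C1" using noT i23a(2) i23b(2) by blast
    have o1: "clen C1 s12 s13 > l12" using i12a(4)[of s13] m12[of s13] s13n i13a(1) by auto
    have o2: "clen C3 s23 s13 > l23" using i23b(4)[of s13] m23[of s13] s13n i13b(1) by auto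
    have o3: "clen C1 s13 t12 > l13" using i13a(4)[of t12] m13[of t12] t12n i12a(2) by auto
    have o4: "clen C3 s23 t13 > l23" using i23b(4)[of t13] m23[of t13] t13n i13b(2) by auto
    have o5: "clen C1 s12 t13 > l12" using i12a(4)[of t13] m12[of t13] t13n i13a(2) by auto
    have o6: "clen C1 s13 s12 > l13" using i13a(4)[of s12] m13[of s12] s12n i12a(1) by auto
    have o7: "clen C2 s23 t12 > l23" using i23a(4)[of t12] m23[of t12] t12n i12b(2) by auto
    have o8: "clen C2 s23 s12 > l23" using i23a(4)[of s12] m23[of s12] s12n i12b(1) by auto
    have o9: "clen C3 s13 t23 > l13" using i13b(4)[of t23] m13[of t23] t23n i23b(2) by auto
    define Qa where "Qa = seg C1 t12 (clen C1 t12 s13)"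
    define Qb where "Qb = seg C3 s13 (clen C3 s13 s23)"
    have sQa: "set Qa = {x \<in> set C1. clen C1 t12 x \<le> clen C1 t12 s13}"
      unfolding Qa_def using seg_set[OF d1 i12a(2) clen_lt[OF i12a(2)]] .
    have sQb: "set Qb = {x \<in> set C3. clen C3 s13 x \<le> clen C3 s13 s23}"
      unfolding Qb_def using seg_set[OF d3 i13b(1) clen_lt[OF i13b(1)]] .
    have dQa: "dpath E Qa" unfolding Qa_def using seg_dpath[OF c1(1) i12a(2) clen_lt[OF i12a(2)]] .
    have dQb: "dpath E Qb" unfolding Qb_def using seg_dpath[OF c3(1) i13b(1) clen_lt[OF i13b(1)]] .
    have hQa: "hd Qa = t12" "last Qa = s13" unfolding Qa_def using seg_hd[OF d1 i12a(2)] seg_last[OF d1 i12a(2) i13a(1)] by auto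
    have hQb: "hd Qb = s13" "last Qb = s23" unfolding Qb_def using seg_hd[OF d3 i13b(1)] seg_last[OF d3 i13b(1) i23b(1)] by auto
    have QaQb: "set Qa \<inter> set Qb \<subseteq> {hd Qb}"
    proof
      fix x assume x: "x \<in> set Qa \<inter> set Qb"
      hence x1: "x \<in> set C1" "x \<in> set C3" "clen C1 t12 x \<le> clen C1 t12 s13" using sQa sQb by auto
      have xi: "clen C1 s13 x \<le> l13" using i13a(4)[of x] m13[of x] x1 by auto
      have "clen C1 t12 x = clen C1 t12 s13 + clen C1 s13 x"
        using out_in[OF d1 i13a(1) i12a(2) x1(1) o3 xi] .
      hence "clen C1 s13 x = 0" using x1(3) by simp
      hence "x = s13" using clen_0_iff[OF d1 i13a(1) x1(1)] by simp
      thus "x \<in> {hd Qb}" using hQb by simp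
    qed
    define Q where "Q = Qa @ tl Qb"
    note app = dpath_app[OF dQa dQb _ QaQb, folded Q_def]
    have dQ: "dpath E Q" "hd Q = t12" "last Q = s23" "set Q = set Qa \<union> set Qb"
      "plen Q = clen C1 t12 s13 + clen C3 s13 s23"
      using app hQa hQb unfolding Qa_def Qb_def by auto
    have QC2: "set Q \<inter> set C2 \<subseteq> {t12, s23}"
    proof
      fix x assume x: "x \<in> set Q \<inter> set C2"
      hence dis: "x \<in> set Qa \<or> x \<in> set Qb" and xC2: "x \<in> set C2" using dQ(4) by auto
      from dis show "x \<in> {t12, s23}"
      proof
        assume xa: "x \<in> set Qa"
        hence x1: "x \<in> set C1" "clen C1 t12 x \<le> clen C1 t12 s13" using sQa by auto
        have xi: "clen C1 s12 x \<le> l12" using i12a(4)[of x] m12[of x] x1 xC2 by auto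
        show ?thesis
        proof (rule ccontr)
          assume "x \<notin> {t12, s23}"
          hence "x \<noteq> t12" by simp
          hence "clen C1 t12 s13 < clen C1 t12 x"
            using rev_iv[OF d1 i12a(1) i12a(2) x1(1) i13a(1) i12a(3) xi _ o1] by simp
          thus False using x1(2) by simp
        qed
      next
        assume xb: "x \<in> set Qb"
        hence x3: "x \<in> set C3" "clen C3 s13 x \<le> clen C3 s13 s23" using sQb by auto
        have xi: "clen C3 s23 x \<le> l23" using i23b(4)[of x] m23[of x] x3 xC2 by auto
        have "clen C3 s13 x = clen C3 s13 s23 + clen C3 s23 x"
          using out_in[OF d3 i23b(1) i13b(1) x3(1) o2 xi] .
        hence "clen C3 s23 x = 0" using x3(2) by simp
        hence "x = s23" using clen_0_iff[OF d3 i23b(1) x3(1)] by simp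
        thus ?thesis by simp
      qed
    qed
    have s13Q: "s13 \<in> set Q" using dQ(4) hQa last_in_set[of Qa] dQa by (auto simp: dpath_def)
    have t12s23: "t12 \<noteq> s23" using s23n i12a(2) by auto
    have ear1: "\<not> (k \<le> clen C2 s23 t12 \<and> (k \<le> clen C2 t12 s23 \<or> k \<le> plen Q))"
    proof
      assume h: "k \<le> clen C2 s23 t12 \<and> (k \<le> clen C2 t12 s23 \<or> k \<le> plen Q)"
      have "has_B_subdivision E k 1 k"
        using ear[OF c2(1) i12b(2) i23a(1) t12s23 dQ(1,2,3) QC2 s13Q s13n conjunct1[OF h] conjunct2[OF h] kp] .
      thus False using assms(3) by simp
    qed
    define Ra where "Ra = seg C3 t23 (clen C3 t23 t13)"
    define Rb where "Rb = seg C1 t13 (clen C1 t13 s12)"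
    have sRa: "set Ra = {x \<in> set C3. clen C3 t23 x \<le> clen C3 t23 t13}"
      unfolding Ra_def using seg_set[OF d3 i23b(2) clen_lt[OF i23b(2)]] .
    have sRb: "set Rb = {x \<in> set C1. clen C1 t13 x \<le> clen C1 t13 s12}"
      unfolding Rb_def using seg_set[OF d1 i13a(2) clen_lt[OF i13a(2)]] .
    have dRa: "dpath E Ra" unfolding Ra_def using seg_dpath[OF c3(1) i23b(2) clen_lt[OF i23b(2)]] .
    have dRb: "dpath E Rb" unfolding Rb_def using seg_dpath[OF c1(1) i13a(2) clen_lt[OF i13a(2)]] .
    have hRa: "hd Ra = t23" "last Ra = t13" unfolding Ra_def using seg_hd[OF d3 i23b(2)] seg_last[OF d3 i23b(2) i13b(2)] by auto
    have hRb: "hd Rb = t13" "last Rb = s12" unfolding Rb_def using seg_hd[OF d1 i13a(2)] seg_last[OF d1 i13a(2) i12a(1)] by auto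
    have RaRb: "set Ra \<inter> set Rb \<subseteq> {hd Rb}"
    proof
      fix x assume x: "x \<in> set Ra \<inter> set Rb"
      hence x1: "x \<in> set C1" "x \<in> set C3" "clen C1 t13 x \<le> clen C1 t13 s12" using sRa sRb by auto
      have xi: "clen C1 s13 x \<le> l13" using i13a(4)[of x] m13[of x] x1 by auto
      show "x \<in> {hd Rb}"
      proof (rule ccontr)
        assume "x \<notin> {hd Rb}"
        hence "x \<noteq> t13" using hRb by simp
        hence "clen C1 t13 s12 < clen C1 t13 x"
          using rev_iv[OF d1 i13a(1) i13a(2) x1(1) i12a(1) i13a(3) xi _ o6] by simp
        thus False using x1(3) by simp
      qed
    qed
    define R where "R = Ra @ tl Rb"
    note app2 = dpath_app[OF dRa dRb _ RaRb, folded R_def]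
    have dR: "dpath E R" "hd R = t23" "last R = s12" "set R = set Ra \<union> set Rb"
      "plen R = clen C3 t23 t13 + clen C1 t13 s12"
      using app2 hRa hRb unfolding Ra_def Rb_def by auto
    have RC2: "set R \<inter> set C2 \<subseteq> {t23, s12}"
    proof
      fix x assume x: "x \<in> set R \<inter> set C2"
      hence dis: "x \<in> set Ra \<or> x \<in> set Rb" and xC2: "x \<in> set C2" using dR(4) by auto
      from dis show "x \<in> {t23, s12}"
      proof
        assume xa: "x \<in> set Ra"
        hence x3: "x \<in> set C3" "clen C3 t23 x \<le> clen C3 t23 t13" using sRa by auto
        have xi: "clen C3 s23 x \<le> l23" using i23b(4)[of x] m23[of x] x3 xC2 by auto
        show ?thesis
        proof (rule ccontr)
          assume "x \<notin> {t23, s12}"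
          hence "x \<noteq> t23" by simp
          hence "clen C3 t23 t13 < clen C3 t23 x"
            using rev_iv[OF d3 i23b(1) i23b(2) x3(1) i13b(2) i23b(3) xi _ o4] by simp
          thus False using x3(2) by simp
        qed
      next
        assume xb: "x \<in> set Rb"
        hence x1: "x \<in> set C1" "clen C1 t13 x \<le> clen C1 t13 s12" using sRb by auto
        have xi: "clen C1 s12 x \<le> l12" using i12a(4)[of x] m12[of x] x1 xC2 by auto
        have "clen C1 t13 x = clen C1 t13 s12 + clen C1 s12 x"
          using out_in[OF d1 i12a(1) i13a(2) x1(1) o5 xi] .
        hence "clen C1 s12 x = 0" using x1(2) by simp
        hence "x = s12" using clen_0_iff[OF d1 i12a(1) x1(1)] by simp
        thus ?thesis by simp
      qed
    qed
    have t13R: "t13 \<in> set R" using dR(4) hRa last_in_set[of Ra] dRa by (auto simp: dpath_def)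
    have t23s12: "t23 \<noteq> s12" using t23n i12a(1) by auto
    have ear2: "\<not> (k \<le> clen C2 s12 t23 \<and> (k \<le> clen C2 t23 s12 \<or> k \<le> plen R))"
    proof
      assume h: "k \<le> clen C2 s12 t23 \<and> (k \<le> clen C2 t23 s12 \<or> k \<le> plen R)"
      have "has_B_subdivision E k 1 k"
        using ear[OF c2(1) i23a(2) i12b(1) t23s12 dR(1,2,3) RC2 t13R t13n conjunct1[OF h] conjunct2[OF h] kp] .
      thus False using assms(3) by simp
    qed
    have E1: "clen C2 t12 v = clen C2 t12 s23 + clen C2 s23 v"
      using out_in[OF d2 i23a(1) i12b(2) vC2 o7 v23a] .
    have v23: "clen C2 s23 v \<le> l23" using v23a .
    have E2: "clen C2 v s12 = clen C2 v t23 + clen C2 t23 s12"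
      using in_out[OF d2 i23a(1) i23a(2) i12b(1) vC2 i23a(3) o8 v23a] .
    have E2b: "clen C2 s23 t23 = clen C2 s23 v + clen C2 v t23"
      using clen_tri[OF d2 i23a(1) vC2 i23a(2)] v23a i23a(3) by simp
    have E3: "clen C2 s23 t12 + clen C2 t12 s23 = length C2"
      using clen_sum[OF d2 i23a(1) i12b(2)] t12s23 by auto
    have E4: "clen C2 s12 t23 + clen C2 t23 s12 = length C2"
      using clen_sum[OF d2 i12b(1) i23a(2)] t23s12 by auto
    have cases: "(clen C2 t12 v < 2 * k \<and> plen Q < k) \<or> (clen C2 v s12 < 2 * k \<and> plen R < k)"
      using ear1 ear2 E1 E2 E2b E3 E4 ab c2(3) i23a(3) i23a(5) i12b(5) v23 by linarith
    have F1: "clen C3 s13 v = clen C3 s13 s23 + clen C3 s23 v"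
      using out_in[OF d3 i23b(1) i13b(1) vC3 o2 v23b] .
    have F2: "clen C3 s13 v = clen C3 s13 t13 + clen C3 t13 v"
      using clen_tri[OF d3 i13b(1) i13b(2) vC3] i13b(3) v13 by simp
    have G1: "clen C3 v s13 = clen C3 v t23 + clen C3 t23 s13"
      using in_out[OF d3 i23b(1) i23b(2) i13b(1) vC3 i23b(3) o2 v23b] .
    have G2: "clen C3 t23 t13 = clen C3 t23 s13 + clen C3 s13 t13"
      using out_in[OF d3 i13b(1) i23b(2) i13b(2) o9] i13b(3) by simp
    have G3: "clen C3 s23 t23 = clen C3 s23 v + clen C3 v t23"
      using clen_tri[OF d3 i23b(1) vC3 i23b(2)] v23b i23b(3) by simp
    show ?thesis
      using cases F1 F2 G1 G2 G3 dQ(5) dR(5) i23b(3) i23b(5) i13b(3) by linarith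
  qed
  show ?thesis using notboth oneof st12 st13 by auto
qed


end
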